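(* Let $m, n \geq 2$ be integers and let $D_n^m \subset \mathbb{R}^2$ be the set defined below, with bars $B_1,\dots,B_{2^n}$. Let $A$ and $A'$ be translates of $D_n^m$, with bars $B_i$ of $A$ and $B_i'$ of $A'$ being the translates of the corresponding bars of $D_n^m$. Suppose that for some $1 \leq r \leq 2^n$ the first bar $B_1'$ of $A'$ is obtained from the bar $B_r$ of $A$ by a translation by $y^\ast \geq 1$ downwards and by $x^\ast$ to the right, where $1 \leq x^\ast \leq m-1$. Then $A$ and $A'$ have disjoint interiors.
   Context: Let $s_1, s_2, \dots$ be the sequence with $s_i = 1 + \nu_2(i)$, where $\nu_2(i)$ is the exponent of $2$ in the prime factorization of $i$ (so $s_i$ is the position, counted from the right, of the lowest $1$ bit of $i$ in binary; the sequence begins $1,2,1,3,1,2,1,4,\dots$). For $i \geq 1$ put $y_i = \sum_{j=1}^{i-1} s_j$ (so $y_1 = 0$). For integers $m \geq 2$, $n \geq 1$, define the bars $B_i = [(i-1)m,\, im] \times [y_i,\, y_i + 1]$ for $1 \leq i \leq 2^n$ (axis-parallel rectangles of width $m$ and height $1$), and the connectors $V_i = [im-1,\, im] \times [y_i + 1,\, y_{i+1} + 1]$ for $1 \leq i \leq 2^n - 1$ (axis-parallel rectangles of width $1$ and height $s_i$). Define $D_n^m = \bigcup_{i=1}^{2^n} B_i \cup \bigcup_{i=1}^{2^n-1} V_i$; this is a topological disk in the plane. *)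

theory Defs
  imports "HOL-Analysis.Analysis" "HOL-Computational_Algebra.Factorial_Ring"
begin

definition s_seq :: "nat \<Rightarrow> nat" where
  "s_seq i = 1 + multiplicity (2::nat) i"

definition y_seq :: "nat \<Rightarrow> nat" where
  "y_seq i = (\<Sum>j\<in>{1..<i}. s_seq j)"

definition bar :: "nat \<Rightarrow> nat \<Rightarrow> (real \<times> real) set" where
  "bar m i = {real ((i - 1) * m) .. real (i * m)} \<times> {real (y_seq i) .. real (y_seq i) + 1}"

definition connector :: "nat \<Rightarrow> nat \<Rightarrow> (real \<times> real) set" where
  "connector m i = {real (i * m) - 1 .. real (i * m)} \<times>
                   {real (y_seq i) + 1 .. real (y_seq (Suc i)) + 1}"

definition Dnm :: "nat \<Rightarrow> nat \<Rightarrow> (real \<times> real) set" where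
  "Dnm n m = (\<Union>i\<in>{1..2^n}. bar m i) \<union> (\<Union>i\<in>{1..<2^n}. connector m i)"

end

theory Submission
  imports Defs
begin

lemma sum_mult_fact: "(\<Sum>j\<in>{1..k}. multiplicity (2::nat) j) = multiplicity 2 (fact k::nat)"
proof (induction k)
  case 0 then show ?case by simp
next
  case (Suc k)
  have "multiplicity (2::nat) (fact (Suc k)::nat) = multiplicity 2 (Suc k) + multiplicity 2 (fact k::nat)"
    by (subst fact_Suc, subst of_nat_id, rule prime_elem_multiplicity_mult_distrib) auto
  moreover have "{1..Suc k} = insert (Suc k) {1..k}" by auto
  ultimately show ?case using Suc by simp
qed

lemma y_seq_eq: "y_seq (Suc k) = k + multiplicity (2::nat) (fact k::nat)"
proof -
  have "{1..<Suc k} = {1..k}" by auto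
  then show ?thesis unfolding y_seq_def s_seq_def using sum_mult_fact[of k]
    by (simp add: sum.distrib del: One_nat_def)
qed

lemma mult_fact_super: "multiplicity (2::nat) (fact p::nat) + multiplicity 2 (fact q::nat) \<le> multiplicity 2 (fact (p+q)::nat)"
proof -
  have e: "(fact (p+q)::nat) = fact p * fact q * ((p+q) choose p)"
    using binomial_fact_lemma[of p "p+q"] by (simp add: ac_simps)
  have nz: "((p+q) choose p) \<noteq> 0" by simp
  have "multiplicity (2::nat) (fact (p+q)::nat) = multiplicity 2 (fact p::nat) + multiplicity 2 (fact q::nat) + multiplicity 2 ((p+q) choose p)"
    unfolding e using nz
    by (simp add: prime_elem_multiplicity_mult_distrib fact_nonzero)
  then show ?thesis by simp
qed

lemma y_super: "1 \<le> a \<Longrightarrow> 1 \<le> b \<Longrightarrow> y_seq a + y_seq b \<le> y_seq (a + b - 1)"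
proof -
  assume "1 \<le> a" "1 \<le> b"
  then obtain p q where "a = Suc p" "b = Suc q" by (metis Suc_le_D One_nat_def)
  then show ?thesis using mult_fact_super[of p q] by (simp add: y_seq_eq)
qed

lemma y_mono: "y_seq i \<le> y_seq (Suc i)"
  unfolding y_seq_def by (rule sum_mono2) auto


lemma low:
  assumes "(x,y) \<in> Dnm n m" "m \<ge> 2" "\<forall>j::nat. j \<le> 2^n \<longrightarrow> x \<noteq> real j * real m"
  shows "\<exists>j. 1 \<le> j \<and> j \<le> 2^n \<and> (real j - 1) * m < x \<and> x < real j * m \<and> real (y_seq j) \<le> y"
  using assms(1) unfolding Dnm_def
proof (elim UnE UN_E)
  fix i assume i: "i \<in> {1..2^n}" and xy: "(x,y) \<in> bar m i"
  have r: "real (i-1) = real i - 1" using i by auto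
  have "x \<noteq> real (i-1) * m" "x \<noteq> real i * m" using assms(3)[rule_format, of "i-1"] assms(3)[rule_format, of i] i r by auto
  with xy i r show ?thesis unfolding bar_def by (intro exI[of _ i]) auto
next
  fix i assume i: "i \<in> {1..<2^n}" and xy: "(x,y) \<in> connector m i"
  have "x \<noteq> real i * m" using assms(3)[rule_format, of i] i by auto
  moreover have "real (y_seq i) \<le> real (y_seq i) + 1" by simp
  ultimately show ?thesis using xy i assms(2) unfolding connector_def
    by (intro exI[of _ i]) (auto simp: algebra_simps)
qed

lemma up:
  assumes "(x,y) \<in> Dnm n m" "m \<ge> 2" "\<forall>j::nat. j \<le> 2^n \<longrightarrow> x \<noteq> real j * real m"
  shows "\<exists>i. 1 \<le> i \<and> i \<le> 2^n \<and> (real i - 1) * m < x \<and> x < real i * m \<and> y \<le> real (y_seq (Suc i)) + 1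
      \<and> (x < real i * m - 1 \<longrightarrow> y \<le> real (y_seq i) + 1)"
  using assms(1) unfolding Dnm_def
proof (elim UnE UN_E)
  fix i assume i: "i \<in> {1..2^n}" and xy: "(x,y) \<in> bar m i"
  have r: "real (i-1) = real i - 1" using i by auto
  have "x \<noteq> real (i-1) * m" "x \<noteq> real i * m" using assms(3)[rule_format, of "i-1"] assms(3)[rule_format, of i] i r by auto
  moreover have "real (y_seq i) \<le> real (y_seq (Suc i))" using y_mono[of i] by simp
  ultimately show ?thesis using xy i r unfolding bar_def by (intro exI[of _ i]) auto
next
  fix i assume i: "i \<in> {1..<2^n}" and xy: "(x,y) \<in> connector m i"
  have "x \<noteq> real i * m" using assms(3)[rule_format, of i] i by auto
  then show ?thesis using xy i assms(2) unfolding connector_def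
    by (intro exI[of _ i]) (auto simp: algebra_simps)
qed


lemma avoid_finite:
  fixes a d :: real assumes "finite F" "d > 0"
  shows "\<exists>x. \<bar>x - a\<bar> < d \<and> x \<notin> F"
proof -
  have "infinite {a-d<..<a+d}" using assms(2) by simp
  then have "\<not> {a-d<..<a+d} \<subseteq> F" using assms(1) finite_subset by blast
  then obtain x where "x \<in> {a-d<..<a+d}" "x \<notin> F" by blast
  then show ?thesis by (intro exI[of _ x]) auto
qed

lemma mem_transl: "q \<in> (\<lambda>p. p + (t::real\<times>real)) ` S \<Longrightarrow> (fst q - fst t, snd q - snd t) \<in> S"
proof -
  assume "q \<in> (\<lambda>p. p + t) ` S"
  then obtain p where "p \<in> S" "q = p + t" by blast
  then show ?thesis by (cases p) simp
qed

lemma transl: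
  fixes m r :: nat and t t' :: "real \<times> real" and xs ys :: real
  assumes "1 \<le> r" "m \<ge> 2"
    and H: "(\<lambda>p. p + t') ` bar m 1 = (\<lambda>p. p + (xs, - ys)) ` ((\<lambda>p. p + t) ` bar m r)"
  shows "fst t' = fst t + (real r - 1) * m + xs" "snd t' = snd t + real (y_seq r) - ys"
proof -
  have y1: "y_seq (Suc 0) = 0" unfolding y_seq_def by simp
  have rr: "real (r - 1) = real r - 1" using assms(1) by auto
  have "t' \<in> (\<lambda>p. p + t') ` bar m 1" by (rule image_eqI[of _ _ "(0,0)"]) (auto simp: bar_def y1 zero_prod_def)
  then have "t' \<in> (\<lambda>p. p + t + (xs,-ys)) ` bar m r" unfolding H image_image by (simp add: add.assoc)
  then obtain q where q: "q \<in> bar m r" "t' = q + t + (xs,-ys)" by blast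
  have q1: "fst q \<ge> (real r - 1)*m" "snd q \<ge> real (y_seq r)" using q(1) rr unfolding bar_def by (auto simp: mem_Times_iff)
  have g1: "fst t' = fst q + fst t + xs" "snd t' = snd q + snd t - ys" using q(2) by auto
  define z where "z = (((real r - 1)*m, real (y_seq r)) :: real \<times> real)"
  have "z \<in> bar m r" unfolding z_def bar_def using rr by (auto simp: mem_Times_iff algebra_simps)
  then have "z + t + (xs,-ys) \<in> (\<lambda>p. p + t + (xs,-ys)) ` bar m r" by blast
  then have "z + t + (xs,-ys) \<in> (\<lambda>p. p + t') ` bar m 1" unfolding H image_image by (simp add: add.assoc)
  then obtain q' where q': "q' \<in> bar m 1" "z + t + (xs,-ys) = q' + t'" by blast
  have q2: "fst q' \<ge> 0" "snd q' \<ge> 0" using q'(1) y1 unfolding bar_def by (auto simp: mem_Times_iff)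
  have g2: "fst z + fst t + xs = fst q' + fst t'" "snd z + snd t - ys = snd q' + snd t'"
    using arg_cong[OF q'(2), of fst] arg_cong[OF q'(2), of snd] by auto
  show "fst t' = fst t + (real r - 1) * m + xs" using q1 g1 q2 g2 unfolding z_def by auto
  show "snd t' = snd t + real (y_seq r) - ys" using q1 g1 q2 g2 unfolding z_def by auto
qed

theorem lemma2:
  fixes m n r :: nat and t t' :: "real \<times> real" and xs ys :: real
  assumes "m \<ge> 2" and "n \<ge> 2"
    and "1 \<le> r" and "r \<le> 2^n"
    and "ys \<ge> 1"
    and "1 \<le> xs" and "xs \<le> real m - 1"
    and "(\<lambda>p. p + t') ` bar m 1 = (\<lambda>p. p + (xs, - ys)) ` ((\<lambda>p. p + t) ` bar m r)"
  shows "interior ((\<lambda>p. p + t) ` Dnm n m) \<inter> interior ((\<lambda>p. p + t') ` Dnm n m) = {}"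
proof -
  note H = assms(8)
  define c where "c = fst t + (real r - 1) * m + xs"
  define d where "d = snd t + real (y_seq r) - ys"
  have tc: "fst t' = c" "snd t' = d" using transl[OF assms(3) assms(1) assms(8)] unfolding c_def d_def by auto
  show ?thesis
  proof (rule ccontr)
    assume "interior ((\<lambda>p. p + t) ` Dnm n m) \<inter> interior ((\<lambda>p. p + t') ` Dnm n m) \<noteq> {}"
    then obtain p where p1: "p \<in> interior ((\<lambda>p. p + t) ` Dnm n m)"
        and p2: "p \<in> interior ((\<lambda>p. p + t') ` Dnm n m)" by blast
    obtain e1 where e1: "e1 > 0" "ball p e1 \<subseteq> (\<lambda>p. p + t) ` Dnm n m"
      using p1 mem_interior by blast
    obtain e2 where e2: "e2 > 0" "ball p e2 \<subseteq> (\<lambda>p. p + t') ` Dnm n m"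
      using p2 mem_interior by blast
    define e where "e = min e1 e2"
    have e: "e > 0" using e1 e2 e_def by auto
    define F where "F = (\<lambda>j. fst t + real j * m) ` {..2^n} \<union> (\<lambda>j. c + real j * m) ` {..2^n}"
    have "finite F" unfolding F_def by auto
    then obtain X where X: "\<bar>X - fst p\<bar> < e/2" "X \<notin> F"
      using avoid_finite[of F "e/2" "fst p"] e by auto
    have d1: "dist (X, snd p) p < e" using X e by (cases p) (simp add: dist_Pair_Pair dist_real_def)
    have "dist (X, snd p + e/4) p \<le> \<bar>X - fst p\<bar> + \<bar>e/4\<bar>"
      using sqrt_sum_squares_le_sum_abs[of "X - fst p" "e/4"] e
      by (cases p) (simp add: dist_Pair_Pair dist_real_def abs_of_pos)
    then have d2: "dist (X, snd p + e/4) p < e" using X e by auto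
    have A1: "(X, snd p) \<in> (\<lambda>p. p + t) ` Dnm n m" using d1 e1 e_def by (auto simp: dist_commute)
    have A2: "(X, snd p + e/4) \<in> (\<lambda>p. p + t') ` Dnm n m" using d2 e2 e_def by (auto simp: dist_commute)
    have D1: "(X - fst t, snd p - snd t) \<in> Dnm n m" using mem_transl[OF A1] by simp
    have D2: "(X - c, snd p + e/4 - d) \<in> Dnm n m" using mem_transl[OF A2] tc by simp
    have nF1: "\<forall>j::nat. j \<le> 2^n \<longrightarrow> X - fst t \<noteq> real j * real m"
    proof (intro allI impI)
      fix j :: nat assume "j \<le> 2^n"
      then have "fst t + real j * m \<in> F" unfolding F_def by auto
      moreover have "X - fst t = real j * real m \<Longrightarrow> X = fst t + real j * m" by simp
      ultimately show "X - fst t \<noteq> real j * real m" using X(2) by metis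
    qed
    have nF2: "\<forall>j::nat. j \<le> 2^n \<longrightarrow> X - c \<noteq> real j * real m"
    proof (intro allI impI)
      fix j :: nat assume "j \<le> 2^n"
      then have "c + real j * m \<in> F" unfolding F_def by auto
      moreover have "X - c = real j * real m \<Longrightarrow> X = c + real j * m" by simp
      ultimately show "X - c \<noteq> real j * real m" using X(2) by metis
    qed
    obtain j where j: "1 \<le> j" "j \<le> 2^n" "(real j - 1) * m < X - fst t" "X - fst t < real j * m"
        "real (y_seq j) \<le> snd p - snd t"
      using low[OF D1 assms(1) nF1] by blast
    obtain i where i: "1 \<le> i" "i \<le> 2^n" "(real i - 1) * m < X - c" "X - c < real i * m"
        "snd p + e/4 - d \<le> real (y_seq (Suc i)) + 1"
        "X - c < real i * m - 1 \<longrightarrow> snd p + e/4 - d \<le> real (y_seq i) + 1"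
      using up[OF D2 assms(1) nF2] by blast
    have mpos: "real m > 0" using assms(1) by simp
    have "(real j - 1) * m < (real i + real r) * m"
      using j(3) i(4) assms(7) unfolding c_def by (auto simp: algebra_simps)
    then have "real j - 1 < real i + real r" using mpos by (simp add: mult_less_cancel_right)
    then have jle: "j \<le> i + r" by linarith
    have "(real i + real r - 2) * m < real j * m"
      using j(4) i(3) assms(6) unfolding c_def by (auto simp: algebra_simps)
    then have "real i + real r - 2 < real j" using mpos by (simp add: mult_less_cancel_right)
    then have jge: "i + r - 1 \<le> j" by linarith
    show False
    proof (cases "j = i + r")
      case True
      have "y_seq r + y_seq (i+1) \<le> y_seq j" using y_super[of r "i+1"] assms(3) True by (simp add: add.commute)
      then have "real (y_seq r) + real (y_seq (Suc i)) \<le> real (y_seq j)" by simp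
      then show False using i(5) j(5) e assms(5) unfolding d_def by linarith
    next
      case False
      then have jv: "j = i + r - 1" using jle jge by auto
      then have jr: "real j = real i + real r - 1" using i(1) by auto
      have "real j * m = real i * m + real r * m - m" by (simp only: jr) (simp add: algebra_simps)
      then have "X - c < real i * m - 1" using j(4) assms(6) unfolding c_def by (simp add: algebra_simps)
      then have b: "snd p + e/4 - d \<le> real (y_seq i) + 1" using i(6) by blast
      have "y_seq r + y_seq i \<le> y_seq j" using y_super[of r i] assms(3) i(1) jv by (simp add: add.commute)
      then have "real (y_seq r) + real (y_seq i) \<le> real (y_seq j)" by simp
      then show False using b j(5) e assms(5) unfolding d_def by linarith
    qed
  qed
qed

end
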